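(* Let $n>p$ be positive integers, $N$ a real $n\times p$ matrix with $N_{ij}=0$ for $i<j$ and $N_{ii}>0$ for $i=1,\dots,p$, and $X$ a real $n\times p$ matrix with $X_{ij}=0$ for $i<j$. If $NX^{T}$ is skew-symmetric, then $X=0$. *)

theory Defs
  imports "HOL-Analysis.Analysis"
begin

end

theory Submission
  imports Defs
begin

theorem mainTheorem2:
  fixes n p :: nat and N X :: "nat \<Rightarrow> nat \<Rightarrow> real"
  assumes "0 < p" and "p < n"
    and "\<And>i j. i \<in> {1..n} \<Longrightarrow> j \<in> {1..p} \<Longrightarrow> i < j \<Longrightarrow> N i j = 0"
    and "\<And>i. i \<in> {1..p} \<Longrightarrow> N i i > 0"
    and "\<And>i j. i \<in> {1..n} \<Longrightarrow> j \<in> {1..p} \<Longrightarrow> i < j \<Longrightarrow> X i j = 0"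
    and "\<And>i j. i \<in> {1..n} \<Longrightarrow> j \<in> {1..n} \<Longrightarrow>
           (\<Sum>k=1..p. N i k * X j k) = - (\<Sum>k=1..p. N j k * X i k)"
  shows "\<forall>i\<in>{1..n}. \<forall>j\<in>{1..p}. X i j = 0"
proof -
  have main: "m \<in> {1..p} \<longrightarrow> (\<forall>j\<in>{1..n}. X j m = 0)" for m
  proof (induction m rule: less_induct)
    case (less m)
    show ?case
    proof
      assume m: "m \<in> {1..p}"
      then have mn: "m \<in> {1..n}" using assms(2) by auto
      have IH: "\<And>k j. k \<in> {1..p} \<Longrightarrow> k < m \<Longrightarrow> j \<in> {1..n} \<Longrightarrow> X j k = 0"
        using less by blast
      have row: "(\<Sum>k=1..p. N m k * X j k) = N m m * X j m" if j: "j \<in> {1..n}" for j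
      proof -
        have "(\<Sum>k=1..p. N m k * X j k) = (\<Sum>k=1..p. if k = m then N m m * X j m else 0)"
        proof (rule sum.cong)
          fix k assume k: "k \<in> {1..p}"
          show "N m k * X j k = (if k = m then N m m * X j m else 0)"
          proof (cases "k < m")
            case True then show ?thesis using IH[OF k True j] by auto
          next
            case False
            then show ?thesis using assms(3)[OF mn k] by (cases "k = m") auto
          qed
        qed simp
        also have "\<dots> = N m m * X j m" using m by simp
        finally show ?thesis .
      qed
      have Nm: "N m m > 0" using assms(4) m by blast
      have "N m m * X m m = - (N m m * X m m)"
        using assms(6)[OF mn mn] row[OF mn] by simp
      then have Xmm: "X m m = 0" using Nm by simp
      have col: "(\<Sum>k=1..p. N j k * X m k) = 0" for j
      proof (rule sum.neutral, rule ballI)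
        fix k assume k: "k \<in> {1..p}"
        show "N j k * X m k = 0"
        proof (cases "k < m")
          case True then show ?thesis using IH[OF k True mn] by auto
        next
          case False
          then show ?thesis using assms(5)[OF mn k] Xmm by (cases "k = m") auto
        qed
      qed
      show "\<forall>j\<in>{1..n}. X j m = 0"
      proof
        fix j assume j: "j \<in> {1..n}"
        have "N m m * X j m = 0" using assms(6)[OF mn j] row[OF j] col[of j] by simp
        then show "X j m = 0" using Nm by simp
      qed
    qed
  qed
  show ?thesis using main by blast
qed

end
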